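(* Let $(I,\preccurlyeq)$ be a directed set, let $S(\Lambda^{\preccurlyeq})$ be a direct spectrum over $(I,\preccurlyeq)$ with sets $\lambda_0(i)$, transports $\lambda^{\preccurlyeq}_{ij}$ and Bishop spaces $\mathcal F_i=(\lambda_0(i),F_i)$, let $\mathcal F=(X,F)$ be a Bishop space, and let $\mathcal F\to S(\Lambda^{\preccurlyeq})$ be the direct spectrum over $(I,\preccurlyeq)$ with sets $\mathrm{Mor}(\mathcal F,\mathcal F_i)$, transports $(\lambda^{\preccurlyeq}_{ij})^-:\mathrm{Mor}(\mathcal F,\mathcal F_i)\to\mathrm{Mor}(\mathcal F,\mathcal F_j)$, $\theta\mapsto\lambda^{\preccurlyeq}_{ij}\circ\theta$ (for $i\preccurlyeq j$), and Bishop spaces $\mathcal F\to\mathcal F_i$. Then there is a map $\widehat{\ }:\underset{\to}{\mathrm{Lim}}\,[\mathrm{Mor}(\mathcal F,\mathcal F_i)]\to\mathrm{Mor}(\mathcal F,\underset{\to}{\mathrm{Lim}}\,\mathcal F_i)$ with $\widehat{\ }\in\mathrm{Mor}(\underset{\to}{\mathrm{Lim}}\,(\mathcal F\to\mathcal F_i),\mathcal F\to\underset{\to}{\mathrm{Lim}}\,\mathcal F_i)$.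
   Context: Work in Bishop-style constructive mathematics. A directed set: a set with a reflexive transitive relation respecting equality, any two elements having a common upper bound. A direct family over $(I,\preccurlyeq)$: sets $\lambda_0(i)$ and functions $\lambda^{\preccurlyeq}_{ij}:\lambda_0(i)\to\lambda_0(j)$ for $i\preccurlyeq j$ with $\lambda^{\preccurlyeq}_{ii}=\mathrm{id}$ and $\lambda^{\preccurlyeq}_{ik}=\lambda^{\preccurlyeq}_{jk}\circ\lambda^{\preccurlyeq}_{ij}$. Bishop spaces: a Bishop topology on $X$ is a set $F$ of functions $X\to\mathbb R$ containing constants, closed under addition, composition with functions $\mathbb R\to\mathbb R$ uniformly continuous on every $[-n,n]$, and uniform limits; $\bigvee F_0$ = least Bishop topology containing $F_0$; Bishop morphism $(X,F)\to(Y,G)$: function $h$ with $g\circ h\in F$ for all $g\in G$. Exponential: $\mathcal F\to\mathcal G=(\mathrm{Mor}(\mathcal F,\mathcal G),\bigvee\{\phi_{x,g}:x\in X,g\in G\})$, $\phi_{x,g}(h)=g(h(x))$. A direct spectrum: a direct family with Bishop topologies $F_i$ on each set making all transports Bishop morphisms. Direct limit of a direct spectrum (sets $\lambda_0(i)$, transports $\lambda^{\preccurlyeq}_{ij}$, topologies $F_i$): $\sum^{\preccurlyeq}\lambda_0(i)$ = pairs $(i,x)$ with $(i,x)=(j,y)$ iff there is $k\succcurlyeq i,j$ with $\lambda^{\preccurlyeq}_{ik}(x)=\lambda^{\preccurlyeq}_{jk}(y)$; $\underset{\to}{\mathrm{Lim}}\,\lambda_0(i)$ = classes $\mathrm{eql}_0(i,x)$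 under this equality; $\prod^{\succcurlyeq}F_i$ = dependent $\Theta$ with $\Theta_i\in F_i$ and $\Theta_i=\Theta_j\circ\lambda^{\preccurlyeq}_{ij}$ for $i\preccurlyeq j$; $\underset{\to}{\mathrm{Lim}}\,\mathcal F_i=(\underset{\to}{\mathrm{Lim}}\,\lambda_0(i),\bigvee\{\mathrm{eql}_0f_\Theta:\Theta\in\prod^{\succcurlyeq}F_i\})$ with $\mathrm{eql}_0f_\Theta(\mathrm{eql}_0(i,x))=\Theta_i(x)$. *)

theory Defs
  imports "HOL-Analysis.Analysis"
begin

definition Bu :: "(real \<Rightarrow> real) set" where
  "Bu = {\<phi>. \<forall>n::nat. uniformly_continuous_on {- real n .. real n} \<phi>}"

text \<open>A Bishop topology on the carrier X. Functions are HOL functions, and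
  equality of functions X -> R is extensional equality on X, so F is required
  to respect it.\<close>
definition bishop_top :: "'x set \<Rightarrow> ('x \<Rightarrow> real) set \<Rightarrow> bool" where
  "bishop_top X F \<longleftrightarrow>
     (\<forall>f\<in>F. \<forall>g. (\<forall>x\<in>X. f x = g x) \<longrightarrow> g \<in> F) \<and>
     (\<forall>c. (\<lambda>x. c) \<in> F) \<and>
     (\<forall>f\<in>F. \<forall>g\<in>F. (\<lambda>x. f x + g x) \<in> F) \<and>
     (\<forall>f\<in>F. \<forall>\<phi>\<in>Bu. (\<phi> \<circ> f) \<in> F) \<and>
     (\<forall>fs f. (\<forall>n::nat. fs n \<in> F) \<and>
        (\<forall>e>0. \<exists>N. \<forall>n\<ge>N. \<forall>x\<in>X. \<bar>fs n x - f x\<bar> < e) \<longrightarrow> f \<in> F)"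

definition bishop_gen :: "'x set \<Rightarrow> ('x \<Rightarrow> real) set \<Rightarrow> ('x \<Rightarrow> real) set" where
  "bishop_gen X F0 = \<Inter>{F. bishop_top X F \<and> F0 \<subseteq> F}"

definition bmor :: "'x set \<Rightarrow> ('x \<Rightarrow> real) set \<Rightarrow> 'y set \<Rightarrow> ('y \<Rightarrow> real) set
                    \<Rightarrow> ('x \<Rightarrow> 'y) \<Rightarrow> bool" where
  "bmor X F Y G h \<longleftrightarrow> (\<forall>x\<in>X. h x \<in> Y) \<and> (\<forall>g\<in>G. g \<circ> h \<in> F)"

text \<open>The set Mor(F,G); its elements are taken extensional on X, so that HOL
  equality coincides with the (pointwise) equality of Mor(F,G).\<close>
definition Mor :: "'x set \<Rightarrow> ('x \<Rightarrow> real) set \<Rightarrow> 'y set \<Rightarrow> ('y \<Rightarrow> real) set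
                    \<Rightarrow> ('x \<Rightarrow> 'y) set" where
  "Mor X F Y G = {h. h \<in> extensional X \<and> bmor X F Y G h}"

definition exp_top :: "'x set \<Rightarrow> ('x \<Rightarrow> real) set \<Rightarrow> 'y set \<Rightarrow> ('y \<Rightarrow> real) set
                        \<Rightarrow> (('x \<Rightarrow> 'y) \<Rightarrow> real) set" where
  "exp_top X F Y G = bishop_gen (Mor X F Y G) {(\<lambda>h. g (h x)) | x g. x \<in> X \<and> g \<in> G}"

definition directed :: "'i set \<Rightarrow> ('i \<Rightarrow> 'i \<Rightarrow> bool) \<Rightarrow> bool" where
  "directed I le \<longleftrightarrow>
     (\<forall>i\<in>I. le i i) \<and>
     (\<forall>i\<in>I. \<forall>j\<in>I. \<forall>k\<in>I. le i j \<longrightarrow> le j k \<longrightarrow> le i k) \<and>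
     (\<forall>i\<in>I. \<forall>j\<in>I. \<exists>k\<in>I. le i k \<and> le j k)"

definition direct_family :: "'i set \<Rightarrow> ('i \<Rightarrow> 'i \<Rightarrow> bool) \<Rightarrow> ('i \<Rightarrow> 'a set)
                             \<Rightarrow> ('i \<Rightarrow> 'i \<Rightarrow> 'a \<Rightarrow> 'a) \<Rightarrow> bool" where
  "direct_family I le lam tr \<longleftrightarrow>
     (\<forall>i\<in>I. \<forall>j\<in>I. le i j \<longrightarrow> (\<forall>x\<in>lam i. tr i j x \<in> lam j)) \<and>
     (\<forall>i\<in>I. \<forall>x\<in>lam i. tr i i x = x) \<and>
     (\<forall>i\<in>I. \<forall>j\<in>I. \<forall>k\<in>I. le i j \<longrightarrow> le j k \<longrightarrow>
        (\<forall>x\<in>lam i. tr i k x = tr j k (tr i j x)))"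

definition direct_spectrum :: "'i set \<Rightarrow> ('i \<Rightarrow> 'i \<Rightarrow> bool) \<Rightarrow> ('i \<Rightarrow> 'a set)
        \<Rightarrow> ('i \<Rightarrow> 'i \<Rightarrow> 'a \<Rightarrow> 'a) \<Rightarrow> ('i \<Rightarrow> ('a \<Rightarrow> real) set) \<Rightarrow> bool" where
  "direct_spectrum I le lam tr F \<longleftrightarrow>
     direct_family I le lam tr \<and>
     (\<forall>i\<in>I. bishop_top (lam i) (F i)) \<and>
     (\<forall>i\<in>I. \<forall>j\<in>I. le i j \<longrightarrow> bmor (lam i) (F i) (lam j) (F j) (tr i j))"

definition dl_sigma :: "'i set \<Rightarrow> ('i \<Rightarrow> 'a set) \<Rightarrow> ('i \<times> 'a) set" where
  "dl_sigma I lam = {(i, x). i \<in> I \<and> x \<in> lam i}"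

definition dl_eq :: "'i set \<Rightarrow> ('i \<Rightarrow> 'i \<Rightarrow> bool) \<Rightarrow> ('i \<Rightarrow> 'i \<Rightarrow> 'a \<Rightarrow> 'a)
                     \<Rightarrow> 'i \<times> 'a \<Rightarrow> 'i \<times> 'a \<Rightarrow> bool" where
  "dl_eq I le tr p q \<longleftrightarrow>
     (\<exists>k\<in>I. le (fst p) k \<and> le (fst q) k \<and> tr (fst p) k (snd p) = tr (fst q) k (snd q))"

definition dl_class :: "'i set \<Rightarrow> ('i \<Rightarrow> 'i \<Rightarrow> bool) \<Rightarrow> ('i \<Rightarrow> 'a set)
                        \<Rightarrow> ('i \<Rightarrow> 'i \<Rightarrow> 'a \<Rightarrow> 'a) \<Rightarrow> 'i \<times> 'a \<Rightarrow> ('i \<times> 'a) set" where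
  "dl_class I le lam tr p = {q \<in> dl_sigma I lam. dl_eq I le tr p q}"

definition dl_lim :: "'i set \<Rightarrow> ('i \<Rightarrow> 'i \<Rightarrow> bool) \<Rightarrow> ('i \<Rightarrow> 'a set)
                      \<Rightarrow> ('i \<Rightarrow> 'i \<Rightarrow> 'a \<Rightarrow> 'a) \<Rightarrow> ('i \<times> 'a) set set" where
  "dl_lim I le lam tr = dl_class I le lam tr ` dl_sigma I lam"

definition dl_thetas :: "'i set \<Rightarrow> ('i \<Rightarrow> 'i \<Rightarrow> bool) \<Rightarrow> ('i \<Rightarrow> 'a set)
        \<Rightarrow> ('i \<Rightarrow> 'i \<Rightarrow> 'a \<Rightarrow> 'a) \<Rightarrow> ('i \<Rightarrow> ('a \<Rightarrow> real) set) \<Rightarrow> ('i \<Rightarrow> 'a \<Rightarrow> real) set" where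
  "dl_thetas I le lam tr F =
     {\<Theta>. (\<forall>i\<in>I. \<Theta> i \<in> F i) \<and>
          (\<forall>i\<in>I. \<forall>j\<in>I. le i j \<longrightarrow> (\<forall>x\<in>lam i. \<Theta> i x = \<Theta> j (tr i j x)))}"

definition eql_f :: "('i \<Rightarrow> 'a \<Rightarrow> real) \<Rightarrow> ('i \<times> 'a) set \<Rightarrow> real" where
  "eql_f \<Theta> C = (let p = (SOME p. p \<in> C) in \<Theta> (fst p) (snd p))"

definition dl_top :: "'i set \<Rightarrow> ('i \<Rightarrow> 'i \<Rightarrow> bool) \<Rightarrow> ('i \<Rightarrow> 'a set)
        \<Rightarrow> ('i \<Rightarrow> 'i \<Rightarrow> 'a \<Rightarrow> 'a) \<Rightarrow> ('i \<Rightarrow> ('a \<Rightarrow> real) set) \<Rightarrow> (('i \<times> 'a) set \<Rightarrow> real) set" where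
  "dl_top I le lam tr F =
     bishop_gen (dl_lim I le lam tr) (eql_f ` dl_thetas I le lam tr F)"

definition exp_spec_set :: "'x set \<Rightarrow> ('x \<Rightarrow> real) set \<Rightarrow> ('i \<Rightarrow> 'a set)
        \<Rightarrow> ('i \<Rightarrow> ('a \<Rightarrow> real) set) \<Rightarrow> 'i \<Rightarrow> ('x \<Rightarrow> 'a) set" where
  "exp_spec_set X FX lam F i = Mor X FX (lam i) (F i)"

definition exp_spec_tr :: "'x set \<Rightarrow> ('i \<Rightarrow> 'i \<Rightarrow> 'a \<Rightarrow> 'a)
        \<Rightarrow> 'i \<Rightarrow> 'i \<Rightarrow> ('x \<Rightarrow> 'a) \<Rightarrow> ('x \<Rightarrow> 'a)" where
  "exp_spec_tr X tr i j \<theta> = restrict (tr i j \<circ> \<theta>) X"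

definition exp_spec_top :: "'x set \<Rightarrow> ('x \<Rightarrow> real) set \<Rightarrow> ('i \<Rightarrow> 'a set)
        \<Rightarrow> ('i \<Rightarrow> ('a \<Rightarrow> real) set) \<Rightarrow> 'i \<Rightarrow> (('x \<Rightarrow> 'a) \<Rightarrow> real) set" where
  "exp_spec_top X FX lam F i = exp_top X FX (lam i) (F i)"

end

theory Submission
  imports Defs
begin

lemma gen_sub: "G0 \<subseteq> bishop_gen Y G0"
  unfolding bishop_gen_def by blast

lemma gen_top: "bishop_top Y (bishop_gen Y G0)"
  unfolding bishop_top_def
proof (intro conjI ballI allI impI)
  fix f g assume "f \<in> bishop_gen Y G0" "\<forall>x\<in>Y. f x = g x"
  then show "g \<in> bishop_gen Y G0" unfolding bishop_gen_def bishop_top_def by blast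
next
  fix c show "(\<lambda>x. c) \<in> bishop_gen Y G0" unfolding bishop_gen_def bishop_top_def by blast
next
  fix f g assume "f \<in> bishop_gen Y G0" "g \<in> bishop_gen Y G0"
  then show "(\<lambda>x. f x + g x) \<in> bishop_gen Y G0" unfolding bishop_gen_def bishop_top_def by blast
next
  fix f \<phi> assume "f \<in> bishop_gen Y G0" "\<phi> \<in> Bu"
  then show "\<phi> \<circ> f \<in> bishop_gen Y G0" unfolding bishop_gen_def bishop_top_def by blast
next
  fix fs f assume a: "(\<forall>n::nat. fs n \<in> bishop_gen Y G0) \<and> (\<forall>e>0. \<exists>N. \<forall>n\<ge>N. \<forall>x\<in>Y. \<bar>fs n x - f x\<bar> < e)"
  show "f \<in> bishop_gen Y G0" unfolding bishop_gen_def
  proof (rule InterI)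
    fix FF assume "FF \<in> {F. bishop_top Y F \<and> G0 \<subseteq> F}"
    then have "bishop_top Y FF" "\<forall>n. fs n \<in> FF" using a unfolding bishop_gen_def by auto
    then show "f \<in> FF" using a unfolding bishop_top_def by blast
  qed
qed

lemma bt_ext: "bishop_top X F \<Longrightarrow> f \<in> F \<Longrightarrow> \<forall>x\<in>X. f x = g x \<Longrightarrow> g \<in> F"
  unfolding bishop_top_def by blast
lemma bt_const: "bishop_top X F \<Longrightarrow> (\<lambda>x. c) \<in> F"
  unfolding bishop_top_def by blast
lemma bt_add: "bishop_top X F \<Longrightarrow> f \<in> F \<Longrightarrow> g \<in> F \<Longrightarrow> (\<lambda>x. f x + g x) \<in> F"
  unfolding bishop_top_def by blast
lemma bt_comp: "bishop_top X F \<Longrightarrow> f \<in> F \<Longrightarrow> \<phi> \<in> Bu \<Longrightarrow> \<phi> \<circ> f \<in> F"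
  unfolding bishop_top_def by blast
lemma bt_lim: "bishop_top X F \<Longrightarrow> \<forall>n::nat. fs n \<in> F \<Longrightarrow>
   \<forall>e>0. \<exists>N. \<forall>n\<ge>N. \<forall>x\<in>X. \<bar>fs n x - f x\<bar> < e \<Longrightarrow> f \<in> F"
  unfolding bishop_top_def by blast
lemma lift:
  assumes bt: "bishop_top X FX" and h: "\<forall>x\<in>X. h x \<in> Y" and g0: "\<forall>g\<in>G0. g \<circ> h \<in> FX"
  shows "\<forall>g\<in>bishop_gen Y G0. g \<circ> h \<in> FX"
proof -
  let ?S = "{g. g \<circ> h \<in> FX}"
  have "bishop_top Y ?S"
    unfolding bishop_top_def
  proof (intro conjI allI ballI impI)
    fix f g assume f: "f \<in> ?S" and fg: "\<forall>x\<in>Y. f x = g x"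
    have "\<forall>x\<in>X. (f \<circ> h) x = (g \<circ> h) x" using fg h by simp
    then show "g \<in> ?S" using bt_ext[OF bt] f by blast
  next
    fix c show "(\<lambda>x. c) \<in> ?S" using bt_const[OF bt] by (simp add: comp_def)
  next
    fix f g assume "f \<in> ?S" "g \<in> ?S"
    then have "(\<lambda>x. (f \<circ> h) x + (g \<circ> h) x) \<in> FX" using bt_add[OF bt] by blast
    then show "(\<lambda>x. f x + g x) \<in> ?S" by (simp add: comp_def)
  next
    fix f \<phi> assume "f \<in> ?S" "\<phi> \<in> Bu"
    then have "\<phi> \<circ> (f \<circ> h) \<in> FX" using bt_comp[OF bt] by blast
    then show "\<phi> \<circ> f \<in> ?S" by (simp add: comp_assoc)
  next
    fix fs :: "nat \<Rightarrow> _" and f assume a: "(\<forall>n. fs n \<in> ?S) \<and> (\<forall>e>0. \<exists>N. \<forall>n\<ge>N. \<forall>x\<in>Y. \<bar>fs n x - f x\<bar> < e)"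
    have u: "\<forall>e>0. \<exists>N. \<forall>n\<ge>N. \<forall>x\<in>X. \<bar>(fs n \<circ> h) x - (f \<circ> h) x\<bar> < e"
    proof (intro allI impI)
      fix e :: real assume "e > 0"
      then obtain N where "\<forall>n\<ge>N. \<forall>x\<in>Y. \<bar>fs n x - f x\<bar> < e" using a by blast
      then show "\<exists>N. \<forall>n\<ge>N. \<forall>x\<in>X. \<bar>(fs n \<circ> h) x - (f \<circ> h) x\<bar> < e" using h by auto
    qed
    have fs: "\<forall>n. (fs n \<circ> h) \<in> FX" using a by simp
    have "f \<circ> h \<in> FX" using bt_lim[OF bt, of "\<lambda>n. fs n \<circ> h" "f \<circ> h"] fs u by blast
    then show "f \<in> ?S" by simp
  qed
  moreover have "G0 \<subseteq> ?S" using g0 by blast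
  ultimately show ?thesis unfolding bishop_gen_def by blast
qed

lemma df_mem: "direct_family I le lam tr \<Longrightarrow> i \<in> I \<Longrightarrow> j \<in> I \<Longrightarrow> le i j \<Longrightarrow> x \<in> lam i \<Longrightarrow> tr i j x \<in> lam j"
  unfolding direct_family_def by blast
lemma df_comp: "direct_family I le lam tr \<Longrightarrow> i \<in> I \<Longrightarrow> j \<in> I \<Longrightarrow> k \<in> I \<Longrightarrow> le i j \<Longrightarrow> le j k
   \<Longrightarrow> x \<in> lam i \<Longrightarrow> tr i k x = tr j k (tr i j x)"
  unfolding direct_family_def by blast
lemma dir_refl: "directed I le \<Longrightarrow> i \<in> I \<Longrightarrow> le i i"
  unfolding directed_def by blast
lemma dir_trans: "directed I le \<Longrightarrow> i \<in> I \<Longrightarrow> j \<in> I \<Longrightarrow> k \<in> I \<Longrightarrow> le i j \<Longrightarrow> le j k \<Longrightarrow> le i k"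
  unfolding directed_def by blast
lemma dir_ub: "directed I le \<Longrightarrow> i \<in> I \<Longrightarrow> j \<in> I \<Longrightarrow> \<exists>k\<in>I. le i k \<and> le j k"
  unfolding directed_def by blast
lemma th_mem: "\<Theta> \<in> dl_thetas I le lam tr F \<Longrightarrow> i \<in> I \<Longrightarrow> \<Theta> i \<in> F i"
  unfolding dl_thetas_def by blast
lemma th_comp: "\<Theta> \<in> dl_thetas I le lam tr F \<Longrightarrow> i \<in> I \<Longrightarrow> j \<in> I \<Longrightarrow> le i j \<Longrightarrow> x \<in> lam i \<Longrightarrow> \<Theta> i x = \<Theta> j (tr i j x)"
  unfolding dl_thetas_def by blast

lemma class_sub:
  assumes dir: "directed I le" and df: "direct_family I le lam tr"
    and i: "i \<in> I" and j: "j \<in> I" and a: "a \<in> lam i" and b: "b \<in> lam j"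
    and k: "k \<in> I" "le i k" "le j k" and e: "tr i k a = tr j k b"
    and q: "q \<in> dl_sigma I lam" and dq: "dl_eq I le tr (i, a) q"
  shows "dl_eq I le tr (j, b) q"
proof -
  obtain l c where qq: "q = (l, c)" by force
  have l: "l \<in> I" "c \<in> lam l" using q qq by (auto simp: dl_sigma_def)
  obtain k' where k': "k' \<in> I" "le i k'" "le l k'" "tr i k' a = tr l k' c"
    using dq qq by (auto simp: dl_eq_def)
  obtain m where m: "m \<in> I" "le k m" "le k' m" using dir_ub[OF dir k(1) k'(1)] by blast
  have tj: "le j m" using dir_trans[OF dir j k(1) m(1) k(3) m(2)] .
  have tl: "le l m" using dir_trans[OF dir l(1) k'(1) m(1) k'(3) m(3)] .
  have "tr j m b = tr k m (tr j k b)" using df_comp[OF df j k(1) m(1) k(3) m(2) b] .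
  also have "\<dots> = tr k m (tr i k a)" using e by simp
  also have "\<dots> = tr i m a" using df_comp[OF df i k(1) m(1) k(2) m(2) a] by simp
  also have "\<dots> = tr k' m (tr i k' a)" using df_comp[OF df i k'(1) m(1) k'(2) m(3) a] .
  also have "\<dots> = tr k' m (tr l k' c)" using k' by simp
  also have "\<dots> = tr l m c" using df_comp[OF df l(1) k'(1) m(1) k'(3) m(3) l(2)] by simp
  finally show ?thesis using qq m tj tl unfolding dl_eq_def by auto
qed

lemma class_eq:
  assumes dir: "directed I le" and df: "direct_family I le lam tr"
    and i: "i \<in> I" and j: "j \<in> I" and a: "a \<in> lam i" and b: "b \<in> lam j"
    and k: "k \<in> I" "le i k" "le j k" and e: "tr i k a = tr j k b"
  shows "dl_class I le lam tr (i, a) = dl_class I le lam tr (j, b)"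
proof -
  have 1: "\<And>q. q \<in> dl_sigma I lam \<Longrightarrow> dl_eq I le tr (i, a) q \<Longrightarrow> dl_eq I le tr (j, b) q"
    using class_sub[OF dir df i j a b k e] by blast
  have 2: "\<And>q. q \<in> dl_sigma I lam \<Longrightarrow> dl_eq I le tr (j, b) q \<Longrightarrow> dl_eq I le tr (i, a) q"
    using class_sub[OF dir df j i b a k(1,3,2) e[symmetric]] by blast
  show ?thesis unfolding dl_class_def using 1 2 by blast
qed

lemma class_mem:
  assumes dir: "directed I le" and i: "i \<in> I" and a: "a \<in> lam i"
  shows "(i, a) \<in> dl_class I le lam tr (i, a)"
  using i a dir_refl[OF dir i] unfolding dl_class_def dl_sigma_def dl_eq_def by auto

lemma rep_mem:
  assumes dir: "directed I le" and C: "C \<in> dl_lim I le lam tr"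
  shows "(SOME p. p \<in> C) \<in> C \<and> (SOME p. p \<in> C) \<in> dl_sigma I lam"
proof -
  have "C \<in> dl_class I le lam tr ` dl_sigma I lam" using C unfolding dl_lim_def .
  then obtain p where p: "p \<in> dl_sigma I lam" and Cp: "C = dl_class I le lam tr p" by (rule imageE)
  obtain i a where pia: "p = (i, a)" by force
  have i: "i \<in> I" and a: "a \<in> lam i" using p pia unfolding dl_sigma_def by simp_all
  have "(i, a) \<in> C" unfolding Cp pia by (rule class_mem[where lam=lam and tr=tr, OF dir i a])
  then have "(SOME p. p \<in> C) \<in> C" by (rule someI)
  moreover have "C \<subseteq> dl_sigma I lam" unfolding Cp dl_class_def by (rule subsetI) simp
  ultimately show ?thesis by blast
qed

lemma eql_f_class:
  assumes dir: "directed I le" and df: "direct_family I le lam tr"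
    and th: "\<Theta> \<in> dl_thetas I le lam tr F" and i: "i \<in> I" and a: "a \<in> lam i"
  shows "eql_f \<Theta> (dl_class I le lam tr (i, a)) = \<Theta> i a"
proof -
  let ?C = "dl_class I le lam tr (i, a)"
  have "(i, a) \<in> ?C" using class_mem[where lam=lam and tr=tr, OF dir i a] .
  then have r: "(SOME p. p \<in> ?C) \<in> ?C" by (rule someI)
  obtain l c where lc: "(SOME p. p \<in> ?C) = (l, c)" by force
  have r': "(l, c) \<in> ?C" using r lc by simp
  have l: "l \<in> I" "c \<in> lam l" and "dl_eq I le tr (i, a) (l, c)"
    using r' unfolding dl_class_def dl_sigma_def by simp_all
  then obtain k where k: "k \<in> I" "le i k" "le l k" "tr i k a = tr l k c"
    unfolding dl_eq_def by auto
  have "\<Theta> i a = \<Theta> k (tr i k a)" using th_comp[OF th i k(1) k(2) a] .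
  also have "\<dots> = \<Theta> l c" using th_comp[OF th l(1) k(1) k(3) l(2)] k(4) by simp
  finally show ?thesis unfolding eql_f_def Let_def lc by simp
qed

theorem proposition11p6:
  fixes I :: "'i set" and le :: "'i \<Rightarrow> 'i \<Rightarrow> bool"
    and lam :: "'i \<Rightarrow> 'a set" and tr :: "'i \<Rightarrow> 'i \<Rightarrow> 'a \<Rightarrow> 'a"
    and F :: "'i \<Rightarrow> ('a \<Rightarrow> real) set"
    and X :: "'x set" and FX :: "('x \<Rightarrow> real) set"
  assumes "directed I le"
    and "direct_spectrum I le lam tr F"
    and "bishop_top X FX"
  shows "\<exists>hat.
    hat \<in> Mor (dl_lim I le (exp_spec_set X FX lam F) (exp_spec_tr X tr))
              (dl_top I le (exp_spec_set X FX lam F) (exp_spec_tr X tr) (exp_spec_top X FX lam F))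
              (Mor X FX (dl_lim I le lam tr) (dl_top I le lam tr F))
              (exp_top X FX (dl_lim I le lam tr) (dl_top I le lam tr F)) \<and>
    (\<forall>i\<in>I. \<forall>\<theta>\<in>Mor X FX (lam i) (F i).
       hat (dl_class I le (exp_spec_set X FX lam F) (exp_spec_tr X tr) (i, \<theta>))
         = (\<lambda>x\<in>X. dl_class I le lam tr (i, \<theta> x)))"
proof -
  note dir = assms(1) and bt = assms(3)
  have df: "direct_family I le lam tr" and btF: "\<forall>i\<in>I. bishop_top (lam i) (F i)"
    using assms(2) unfolding direct_spectrum_def by auto
  define M where "M = exp_spec_set X FX lam F"
  define trM where "trM = exp_spec_tr X tr"
  define LM where "LM = dl_lim I le M trM"
  define TM where "TM = dl_top I le M trM (exp_spec_top X FX lam F)"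
  define L where "L = dl_lim I le lam tr"
  define T where "T = dl_top I le lam tr F"
  define rep where "rep = (\<lambda>C::('i \<times> ('x \<Rightarrow> 'a)) set. SOME p. p \<in> C)"
  define hat where "hat = (\<lambda>C\<in>LM. \<lambda>x\<in>X. dl_class I le lam tr (fst (rep C), snd (rep C) x))"
  have R: "rep C \<in> C \<and> fst (rep C) \<in> I \<and> snd (rep C) \<in> Mor X FX (lam (fst (rep C))) (F (fst (rep C)))"
    if "C \<in> LM" for C
    using rep_mem[OF dir, of C M trM] that unfolding LM_def rep_def M_def exp_spec_set_def dl_sigma_def
    by auto
  have btTM: "bishop_top LM TM" unfolding LM_def TM_def dl_top_def by (rule gen_top)
  have hatC: "hat C \<in> Mor X FX L T" if C: "C \<in> LM" for C
  proof -
    obtain j \<phi> where jp: "rep C = (j, \<phi>)" by force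
    have j: "j \<in> I" and \<phi>: "\<phi> \<in> Mor X FX (lam j) (F j)" using R[OF C] jp by auto
    have \<phi>X: "\<forall>x\<in>X. \<phi> x \<in> lam j" and \<phi>F: "\<forall>g\<in>F j. g \<circ> \<phi> \<in> FX"
      using \<phi> unfolding Mor_def bmor_def by auto
    have hC: "hat C = (\<lambda>x\<in>X. dl_class I le lam tr (j, \<phi> x))" using C jp unfolding hat_def by simp
    have inL: "\<forall>x\<in>X. hat C x \<in> L" using \<phi>X j hC unfolding L_def dl_lim_def dl_sigma_def by auto
    have "\<forall>g\<in>T. g \<circ> hat C \<in> FX" unfolding T_def dl_top_def
    proof (rule lift[OF bt])
      show "\<forall>x\<in>X. hat C x \<in> dl_lim I le lam tr" using inL unfolding L_def .
      show "\<forall>g\<in>eql_f ` dl_thetas I le lam tr F. g \<circ> hat C \<in> FX"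
      proof
        fix g assume "g \<in> eql_f ` dl_thetas I le lam tr F"
        then obtain \<Theta> where th: "\<Theta> \<in> dl_thetas I le lam tr F" and g: "g = eql_f \<Theta>" by auto
        have "\<Theta> j \<circ> \<phi> \<in> FX" using \<phi>F th j unfolding dl_thetas_def by auto
        moreover have "\<forall>x\<in>X. (\<Theta> j \<circ> \<phi>) x = (g \<circ> hat C) x"
          using eql_f_class[OF dir df th j] \<phi>X hC g by simp
        ultimately show "g \<circ> hat C \<in> FX" using bt_ext[OF bt] by blast
      qed
    qed
    moreover have "hat C \<in> extensional X" using hC by simp
    ultimately show ?thesis using inL unfolding Mor_def bmor_def by auto
  qed
  have mor: "hat \<in> Mor LM TM (Mor X FX L T) (exp_top X FX L T)"
  proof -
    have "\<forall>g\<in>exp_top X FX L T. g \<circ> hat \<in> TM" unfolding exp_top_def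
    proof (rule lift[OF btTM])
      show "\<forall>C\<in>LM. hat C \<in> Mor X FX L T" using hatC by blast
      show "\<forall>g\<in>{(\<lambda>h. g (h x)) | x g. x \<in> X \<and> g \<in> T}. g \<circ> hat \<in> TM"
      proof
        fix G assume "G \<in> {(\<lambda>h. g (h x)) | x g. x \<in> X \<and> g \<in> T}"
        then obtain x g where x: "x \<in> X" and g: "g \<in> T" and G: "G = (\<lambda>h. g (h x))" by auto
        define ex where "ex = (\<lambda>C. hat C x)"
        have "\<forall>g\<in>T. g \<circ> ex \<in> TM" unfolding T_def dl_top_def
        proof (rule lift[OF btTM])
          show "\<forall>C\<in>LM. ex C \<in> dl_lim I le lam tr"
            using hatC x unfolding ex_def Mor_def bmor_def L_def by auto
          show "\<forall>g\<in>eql_f ` dl_thetas I le lam tr F. g \<circ> ex \<in> TM"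
          proof
            fix g assume "g \<in> eql_f ` dl_thetas I le lam tr F"
            then obtain \<Theta> where th: "\<Theta> \<in> dl_thetas I le lam tr F" and g: "g = eql_f \<Theta>" by auto
            define \<Theta>' where "\<Theta>' = (\<lambda>j (\<phi>::'x \<Rightarrow> 'a). \<Theta> j (\<phi> x))"
            have "\<Theta>' \<in> dl_thetas I le M trM (exp_spec_top X FX lam F)"
              unfolding dl_thetas_def
            proof (intro CollectI conjI ballI impI)
              fix i assume i: "i \<in> I"
              have ThF: "\<Theta> i \<in> F i" using th_mem[OF th i] .
              have eqT: "\<Theta>' i = (\<lambda>h. \<Theta> i (h x))" unfolding \<Theta>'_def by simp
              have "(\<lambda>h. \<Theta> i (h x)) \<in> {(\<lambda>h. g (h x)) | x g. x \<in> X \<and> g \<in> F i}"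
                apply (rule CollectI)
                apply (rule exI[of _ x])
                apply (rule exI[of _ "\<Theta> i"])
                using x ThF by simp
              then have "\<Theta>' i \<in> {(\<lambda>h. g (h x)) | x g. x \<in> X \<and> g \<in> F i}"
                unfolding eqT .
              then show "\<Theta>' i \<in> exp_spec_top X FX lam F i"
                unfolding exp_spec_top_def exp_top_def by (rule subsetD[OF gen_sub])
            next
              fix i j \<phi> assume i: "i \<in> I" and j: "j \<in> I" and le: "le i j" and \<phi>: "\<phi> \<in> M i"
              have "\<phi> \<in> Mor X FX (lam i) (F i)" using \<phi> unfolding M_def exp_spec_set_def .
              then have "\<phi> x \<in> lam i" using x unfolding Mor_def bmor_def by blast
              then have "\<Theta> i (\<phi> x) = \<Theta> j (tr i j (\<phi> x))" using th_comp[OF th i j le] by blast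
              then show "\<Theta>' i \<phi> = \<Theta>' j (trM i j \<phi>)"
                unfolding \<Theta>'_def trM_def exp_spec_tr_def using x by simp
            qed
            then have "eql_f \<Theta>' \<in> eql_f ` dl_thetas I le M trM (exp_spec_top X FX lam F)" by (rule imageI)
            then have inTM: "eql_f \<Theta>' \<in> TM" unfolding TM_def dl_top_def by (rule subsetD[OF gen_sub])
            have "\<forall>C\<in>LM. eql_f \<Theta>' C = (g \<circ> ex) C"
            proof
              fix C assume C: "C \<in> LM"
              obtain j \<phi> where jp: "rep C = (j, \<phi>)" by force
              have j: "j \<in> I" and \<phi>: "\<phi> \<in> Mor X FX (lam j) (F j)" using R[OF C] jp by auto
              have \<phi>x: "\<phi> x \<in> lam j" using \<phi> x unfolding Mor_def bmor_def by auto
              have "ex C = dl_class I le lam tr (j, \<phi> x)" using C jp x unfolding ex_def hat_def by simp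
              then have "(g \<circ> ex) C = \<Theta> j (\<phi> x)" using eql_f_class[OF dir df th j \<phi>x] g by simp
              moreover have "eql_f \<Theta>' C = \<Theta> j (\<phi> x)"
                using jp unfolding eql_f_def rep_def \<Theta>'_def Let_def by simp
              ultimately show "eql_f \<Theta>' C = (g \<circ> ex) C" by simp
            qed
            then show "g \<circ> ex \<in> TM" using bt_ext[OF btTM] inTM by blast
          qed
        qed
        then have "g \<circ> ex \<in> TM" using g by blast
        moreover have "G \<circ> hat = g \<circ> ex" unfolding G ex_def by (simp add: comp_def)
        ultimately show "G \<circ> hat \<in> TM" by simp
      qed
    qed
    moreover have "hat \<in> extensional LM" unfolding hat_def by simp
    moreover have "\<forall>C\<in>LM. hat C \<in> Mor X FX L T" using hatC by blast
    ultimately show ?thesis unfolding Mor_def bmor_def by blast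
  qed
  have eq: "hat (dl_class I le M trM (i, \<theta>)) = (\<lambda>x\<in>X. dl_class I le lam tr (i, \<theta> x))"
    if i: "i \<in> I" and \<theta>: "\<theta> \<in> Mor X FX (lam i) (F i)" for i \<theta>
  proof -
    let ?C = "dl_class I le M trM (i, \<theta>)"
    have C: "?C \<in> LM" using i \<theta> unfolding LM_def dl_lim_def dl_sigma_def M_def exp_spec_set_def by auto
    obtain j \<phi> where jp: "rep ?C = (j, \<phi>)" by force
    have j: "j \<in> I" and \<phi>: "\<phi> \<in> Mor X FX (lam j) (F j)" and inC: "(j, \<phi>) \<in> ?C"
      using R[OF C] jp by auto
    then obtain k where k: "k \<in> I" "le i k" "le j k" "trM i k \<theta> = trM j k \<phi>"
      unfolding dl_class_def dl_eq_def by auto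
    show ?thesis
    proof -
      have "dl_class I le lam tr (j, \<phi> x) = dl_class I le lam tr (i, \<theta> x)" if x: "x \<in> X" for x
      proof (rule class_eq[OF dir df j i _ _ k(1,3,2)])
        show "\<phi> x \<in> lam j" using \<phi> x unfolding Mor_def bmor_def by auto
        show "\<theta> x \<in> lam i" using \<theta> x unfolding Mor_def bmor_def by auto
        have "restrict (tr j k \<circ> \<phi>) X x = restrict (tr i k \<circ> \<theta>) X x"
          using k(4) unfolding trM_def exp_spec_tr_def by simp
        then show "tr j k (\<phi> x) = tr i k (\<theta> x)" using x by simp
      qed
      then show ?thesis using C jp unfolding hat_def by (auto intro: restrict_ext)
    qed
  qed
  show ?thesis
    apply (rule exI[of _ hat])
    using mor eq unfolding LM_def TM_def L_def T_def M_def trM_def by blast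
qed

end
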